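(* Let $d\ge 7$ and let $G$ be a $d$-regular graph with girth $5$. Suppose there exists a vertex $x\in V(G)$, with neighbors $x_1,\dots,x_d$, and two distinct indices $i\ne j$ in $[d]$ such that every neighbor of every vertex of $X_i\cup X_j$ lies in $N_2(x)$ (equivalently, no vertex of $X_i\cup X_j$ has a neighbor at distance $3$ from $x$). Then $\chi_b(G)=d+1$.
   Context: $X_t=N(x_t)\setminus\{x\}$ is the $t$-th bunch of $x$. $N_2(x)=N(x)\cup S_2(x)$, where $S_2(x)$ is the set of vertices at distance exactly $2$ from $x$. A proper $k$-coloring is a b-coloring if every color class contains a vertex whose closed neighborhood contains all $k$ colors; $\chi_b(G)$ is the largest $k$ for which $G$ has a b-coloring with $k$ colors. *)

theory Defs
  imports Main "HOL-Library.Extended_Nat"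
begin

definition simple_graph :: "'a set \<Rightarrow> ('a \<Rightarrow> 'a \<Rightarrow> bool) \<Rightarrow> bool" where
  "simple_graph V E \<longleftrightarrow> finite V \<and> (\<forall>u v. E u v \<longrightarrow> u \<in> V \<and> v \<in> V)
     \<and> (\<forall>u v. E u v \<longrightarrow> E v u) \<and> (\<forall>v. \<not> E v v)"

definition nbhd :: "'a set \<Rightarrow> ('a \<Rightarrow> 'a \<Rightarrow> bool) \<Rightarrow> 'a \<Rightarrow> 'a set" where
  "nbhd V E v = {u \<in> V. E v u}"

definition regular :: "'a set \<Rightarrow> ('a \<Rightarrow> 'a \<Rightarrow> bool) \<Rightarrow> nat \<Rightarrow> bool" where
  "regular V E d \<longleftrightarrow> (\<forall>v\<in>V. card (nbhd V E v) = d)"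

definition is_cycle :: "'a set \<Rightarrow> ('a \<Rightarrow> 'a \<Rightarrow> bool) \<Rightarrow> 'a list \<Rightarrow> bool" where
  "is_cycle V E cs \<longleftrightarrow> length cs \<ge> 3 \<and> distinct cs \<and> set cs \<subseteq> V
     \<and> (\<forall>i < length cs. E (cs ! i) (cs ! ((i + 1) mod length cs)))"

definition girth :: "'a set \<Rightarrow> ('a \<Rightarrow> 'a \<Rightarrow> bool) \<Rightarrow> enat" where
  "girth V E = (INF cs \<in> {cs. is_cycle V E cs}. enat (length cs))"

definition S2 :: "'a set \<Rightarrow> ('a \<Rightarrow> 'a \<Rightarrow> bool) \<Rightarrow> 'a \<Rightarrow> 'a set" where
  "S2 V E x = {v \<in> V. v \<noteq> x \<and> \<not> E x v \<and> (\<exists>w \<in> V. E x w \<and> E w v)}"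

definition N2 :: "'a set \<Rightarrow> ('a \<Rightarrow> 'a \<Rightarrow> bool) \<Rightarrow> 'a \<Rightarrow> 'a set" where
  "N2 V E x = nbhd V E x \<union> S2 V E x"

definition b_coloring :: "'a set \<Rightarrow> ('a \<Rightarrow> 'a \<Rightarrow> bool) \<Rightarrow> nat \<Rightarrow> ('a \<Rightarrow> nat) \<Rightarrow> bool" where
  "b_coloring V E k c \<longleftrightarrow>
     (\<forall>v\<in>V. c v < k) \<and> (\<forall>u\<in>V. \<forall>v\<in>V. E u v \<longrightarrow> c u \<noteq> c v)
     \<and> (\<forall>i < k. \<exists>v\<in>V. c v = i \<and>
            (\<forall>j < k. \<exists>u \<in> insert v (nbhd V E v). c u = j))"

definition b_chromatic :: "'a set \<Rightarrow> ('a \<Rightarrow> 'a \<Rightarrow> bool) \<Rightarrow> nat" where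
  "b_chromatic V E = (GREATEST k. \<exists>c. b_coloring V E k c)"

end

theory Submission
  imports Defs
begin
lemma card2: assumes "finite A" "p \<in> A" "q \<in> A" "p \<noteq> q" shows "card (A - {p, q}) = card A - 2"
proof -
  have "card (A - {p,q}) = card A - card {p,q}" using card_Diff_subset assms by (metis empty_subsetI finite.emptyI finite_insert insert_subset)
  then show ?thesis using assms by simp
qed


lemma girth_ge5:
  assumes "girth V E = 5" "is_cycle V E cs" shows "length cs \<ge> 5"
proof -
  have "girth V E \<le> enat (length cs)" unfolding girth_def
    by (rule INF_lower) (use assms in auto)
  then show ?thesis using assms(1) by (simp add: numeral_eq_enat)
qed

lemma girth5_notri:
  assumes sg: "simple_graph V E" and g: "girth V E = 5" and "E a b" "E b c" "E a c"
  shows False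
proof -
  have ab: "a \<noteq> b" "b \<noteq> c" "a \<noteq> c" using sg assms(3-5) unfolding simple_graph_def by metis+
  have "is_cycle V E [a,b,c]"
    unfolding is_cycle_def
  proof (intro conjI allI impI)
    fix i assume "i < length [a,b,c]"
    then have "i = 0 \<or> i = 1 \<or> i = 2" by auto
    then show "E ([a,b,c] ! i) ([a,b,c] ! ((i + 1) mod length [a,b,c]))"
      using assms sg unfolding simple_graph_def by auto
  qed (use ab assms sg in \<open>auto simp: simple_graph_def\<close>)
  from girth_ge5[OF g this] show False by simp
qed

lemma girth5_noc4:
  assumes sg: "simple_graph V E" and g: "girth V E = 5"
    and "u \<noteq> v" "w1 \<noteq> w2" "E u w1" "E w1 v" "E u w2" "E w2 v"
  shows False
proof -
  have ir: "\<And>p. \<not> E p p" and sy: "\<And>p q. E p q \<Longrightarrow> E q p"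
    and inV: "\<And>p q. E p q \<Longrightarrow> p \<in> V \<and> q \<in> V"
    using sg unfolding simple_graph_def by metis+
  have d: "u \<noteq> w1" "w1 \<noteq> v" "u \<noteq> w2" "w2 \<noteq> v" using ir assms by metis+
  have "is_cycle V E [u,w1,v,w2]"
    unfolding is_cycle_def
  proof (intro conjI allI impI)
    fix i assume "i < length [u,w1,v,w2]"
    then have "i = 0 \<or> i = 1 \<or> i = 2 \<or> i = 3" by auto
    then show "E ([u,w1,v,w2] ! i) ([u,w1,v,w2] ! ((i + 1) mod length [u,w1,v,w2]))"
      using assms sy by auto
  qed (use d assms inV in auto)
  from girth_ge5[OF g this] show False by simp
qed

locale g5 =
  fixes V :: "'a set" and E :: "'a \<Rightarrow> 'a \<Rightarrow> bool" and d :: nat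
  assumes sg: "simple_graph V E" and reg: "regular V E d"
    and notri: "\<And>a b c. E a b \<Longrightarrow> E b c \<Longrightarrow> E a c \<Longrightarrow> False"
    and noc4: "\<And>u v w1 w2. u \<noteq> v \<Longrightarrow> w1 \<noteq> w2 \<Longrightarrow> E u w1 \<Longrightarrow> E w1 v \<Longrightarrow> E u w2 \<Longrightarrow> E w2 v \<Longrightarrow> False"
begin

lemma sy: "E u v \<Longrightarrow> E v u" using sg unfolding simple_graph_def by metis
lemma ir: "\<not> E v v" using sg unfolding simple_graph_def by metis
lemma inV: "E u v \<Longrightarrow> u \<in> V" "E u v \<Longrightarrow> v \<in> V" using sg unfolding simple_graph_def by metis+
lemma finV: "finite V" using sg unfolding simple_graph_def by metis
lemma nb_iff: "u \<in> nbhd V E v \<longleftrightarrow> E v u" unfolding nbhd_def using inV by auto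
lemma fin_nb: "finite (nbhd V E v)" using finV unfolding nbhd_def by auto
lemma card_nb: "v \<in> V \<Longrightarrow> card (nbhd V E v) = d" using reg unfolding regular_def by auto
lemma nb_sub: "nbhd V E v \<subseteq> V" unfolding nbhd_def by auto

lemma card_nb_le: "card (nbhd V E v) \<le> d"
proof (cases "v \<in> V")
  case True then show ?thesis using card_nb by simp
next
  case False then have "nbhd V E v = {}" using inV nb_iff by blast
  then show ?thesis by simp
qed

lemma greedy:
  assumes P: "P \<subseteq> V" and rng: "\<forall>v\<in>P. \<kappa> v < Suc d"
    and pr: "\<forall>u\<in>P. \<forall>v\<in>P. E u v \<longrightarrow> \<kappa> u \<noteq> \<kappa> v"
  shows "\<exists>c. (\<forall>v\<in>V. c v < Suc d) \<and> (\<forall>u\<in>V. \<forall>v\<in>V. E u v \<longrightarrow> c u \<noteq> c v) \<and> (\<forall>v\<in>P. c v = \<kappa> v)"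
proof -
  have gen: "\<exists>c. (\<forall>v\<in>P\<union>S. c v < Suc d) \<and> (\<forall>u\<in>P\<union>S. \<forall>v\<in>P\<union>S. E u v \<longrightarrow> c u \<noteq> c v) \<and> (\<forall>v\<in>P. c v = \<kappa> v)"
    if "finite S" for S
    using that
  proof (induction S rule: finite_induct)
    case empty then show ?case using rng pr by (intro exI[of _ \<kappa>]) auto
  next
    case (insert v S)
    then obtain c where c1: "\<forall>v\<in>P\<union>S. c v < Suc d"
      and c2: "\<forall>u\<in>P\<union>S. \<forall>v\<in>P\<union>S. E u v \<longrightarrow> c u \<noteq> c v" and c3: "\<forall>v\<in>P. c v = \<kappa> v" by blast
    show ?case
    proof (cases "v \<in> P")
      case True
      then have "P \<union> insert v S = P \<union> S" by auto
      then show ?thesis using c1 c2 c3 by (intro exI[of _ c]) simp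
    next
      case False
      define used where "used = c ` nbhd V E v"
      have "card used \<le> d" unfolding used_def using card_image_le[OF fin_nb] card_nb_le le_trans by blast
      then have "\<not> {0..<Suc d} \<subseteq> used"
        using card_mono[of used "{0..<Suc d}"] unfolding used_def using fin_nb by fastforce
      then obtain k where k0: "k \<in> {0..<Suc d}" "k \<notin> used" by blast
      then have k: "k < Suc d" "k \<notin> used" by auto
      define c' where "c' = c(v := k)"
      have "\<forall>w\<in>P\<union>insert v S. c' w < Suc d" using c1 k unfolding c'_def by auto
      moreover have "\<forall>u\<in>P\<union>insert v S. \<forall>w\<in>P\<union>insert v S. E u w \<longrightarrow> c' u \<noteq> c' w"
      proof (intro ballI impI)
        fix u w assume u: "u \<in> P\<union>insert v S" and w: "w \<in> P\<union>insert v S" and e: "E u w"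
        show "c' u \<noteq> c' w"
        proof (cases "u = v")
          case True
          then have "w \<noteq> v" using e ir by auto
          moreover have "c w \<in> used" using e True nb_iff unfolding used_def by auto
          ultimately show ?thesis using True k unfolding c'_def by auto
        next
          case uv: False
          show ?thesis
          proof (cases "w = v")
            case True
            moreover have "c u \<in> used" using e True nb_iff sy unfolding used_def by auto
            ultimately show ?thesis using uv k unfolding c'_def by auto
          next
            case False
            then have "u \<in> P \<union> S" "w \<in> P \<union> S" using u w uv by auto
            then have "c u \<noteq> c w" using e c2 by blast
            then show ?thesis using uv False unfolding c'_def by simp
          qed
        qed
      qed
      moreover have "\<forall>w\<in>P. c' w = \<kappa> w" using c3 False unfolding c'_def by auto
      ultimately show ?thesis by blast
    qed
  qed
  have eq: "P \<union> V = V" using P by blast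
  show ?thesis using gen[OF finV] unfolding eq .
qed

lemma bcol_le:
  assumes "b_coloring V E k c" shows "k \<le> Suc d"
proof (cases "k = 0")
  case False
  then obtain v where v: "v \<in> V" "\<forall>j<k. \<exists>u\<in>insert v (nbhd V E v). c u = j"
    using assms unfolding b_coloring_def by blast
  have sub: "{0..<k} \<subseteq> c ` insert v (nbhd V E v)"
  proof
    fix j assume "j \<in> {0..<k}"
    then obtain u where "u \<in> insert v (nbhd V E v)" "c u = j" using v by auto
    then show "j \<in> c ` insert v (nbhd V E v)" by blast
  qed
  have fi: "finite (insert v (nbhd V E v))" using fin_nb by simp
  have "k \<le> card (c ` insert v (nbhd V E v))"
    using card_mono[OF finite_imageI[OF fi] sub] by simp
  also have "\<dots> \<le> card (insert v (nbhd V E v))" using card_image_le[OF fi] .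
  also have "\<dots> \<le> Suc (card (nbhd V E v))" by (simp add: card_insert_if fin_nb)
  also have "\<dots> \<le> Suc d" using card_nb_le by simp
  finally show ?thesis .
qed simp

end


locale setting = g5 +
  fixes x xi xj
  assumes d7: "d \<ge> 7" and xV: "x \<in> V" and xxi: "E x xi" and xxj: "E x xj" and ij: "xi \<noteq> xj"
  and closed: "\<forall>w \<in> (nbhd V E xi - {x}) \<union> (nbhd V E xj - {x}). nbhd V E w \<subseteq> N2 V E x"
begin

definition "N = nbhd V E x"
definition "S = S2 V E x"
definition "Xi = nbhd V E xi - {x}"
definition "Xj = nbhd V E xj - {x}"
definition "D = N - {xi, xj}"
definition "colm u = (THE y. y \<in> N \<and> E y u)"

lemma N_iff: "y \<in> N \<longleftrightarrow> E x y" unfolding N_def using nb_iff by simp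
lemma S_iff: "u \<in> S \<longleftrightarrow> u \<in> V \<and> u \<noteq> x \<and> \<not> E x u \<and> (\<exists>y. E x y \<and> E y u)"
  unfolding S_def S2_def using inV by auto
lemma NS_disj: "y \<in> N \<Longrightarrow> y \<notin> S" using N_iff S_iff by auto
lemma xN: "x \<notin> N" using N_iff ir by auto
lemma xS: "x \<notin> S" using S_iff by auto
lemma finN: "finite N" unfolding N_def using fin_nb .
lemma cardN: "card N = d" unfolding N_def using card_nb xV by simp

lemma S_x: "u \<in> S \<Longrightarrow> u \<noteq> x" using xS by auto
lemma S_nx: "u \<in> S \<Longrightarrow> \<not> E x u" unfolding S_iff by blast
lemma S_ex: "u \<in> S \<Longrightarrow> \<exists>y. E x y \<and> E y u" unfolding S_iff by blast

lemma colm_unique: assumes "u \<in> S" "y \<in> N" "E y u" shows "colm u = y"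
proof -
  have xu: "x \<noteq> u" using S_x[OF assms(1)] by simp
  have xy: "E x y" using assms(2) N_iff by simp
  have *: "y' = y" if "y' \<in> N" "E y' u" for y'
  proof (rule ccontr)
    assume ne: "y' \<noteq> y"
    have "E x y'" using that(1) N_iff by simp
    then show False using noc4[of x u y' y, OF xu ne] that(2) xy assms(3) by blast
  qed
  show ?thesis unfolding colm_def
    by (rule the_equality) (use assms * in blast)+
qed

lemma colm: assumes "u \<in> S" shows "colm u \<in> N" "E (colm u) u"
proof -
  obtain y where y: "E x y" "E y u" using S_ex[OF assms] by blast
  then have "y \<in> N" using N_iff by simp
  then have "colm u = y" using colm_unique assms y(2) by blast
  then show "colm u \<in> N" "E (colm u) u" using \<open>y \<in> N\<close> y(2) by auto
qed

lemma bunch: assumes "y \<in> N" "E y u" "u \<noteq> x" shows "u \<in> S" "colm u = y"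
proof -
  have "\<not> E x u" using assms notri N_iff by blast
  then show "u \<in> S" using assms S_iff N_iff inV by blast
  then show "colm u = y" using colm_unique assms by auto
qed

lemma xiN: "xi \<in> N" and xjN: "xj \<in> N" using xxi xxj N_iff by auto

lemma Xi_iff: "a \<in> Xi \<longleftrightarrow> a \<in> S \<and> colm a = xi"
proof
  assume "a \<in> Xi" then show "a \<in> S \<and> colm a = xi" using bunch[OF xiN] unfolding Xi_def by (auto simp: nb_iff)
next
  assume a: "a \<in> S \<and> colm a = xi"
  then have "E xi a" "a \<noteq> x" using colm(2)[of a] xS by auto
  then show "a \<in> Xi" unfolding Xi_def by (simp add: nb_iff)
qed

lemma Xj_iff: "a \<in> Xj \<longleftrightarrow> a \<in> S \<and> colm a = xj"
proof
  assume "a \<in> Xj" then show "a \<in> S \<and> colm a = xj" using bunch[OF xjN] unfolding Xj_def by (auto simp: nb_iff)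
next
  assume a: "a \<in> S \<and> colm a = xj"
  then have "E xj a" "a \<noteq> x" using colm(2)[of a] xS by auto
  then show "a \<in> Xj" unfolding Xj_def by (simp add: nb_iff)
qed

lemma card_bunch: assumes "y \<in> N" shows "card (nbhd V E y - {x}) = d - 1"
proof -
  have "x \<in> nbhd V E y" using assms N_iff nb_iff sy by auto
  moreover have "card (nbhd V E y) = d" using card_nb inV(2)[of x y] assms N_iff by blast
  ultimately show ?thesis using card_Diff_singleton[of x "nbhd V E y"] by simp
qed

lemma bunch_sub: assumes "y \<in> N" shows "nbhd V E y - {x} = {u \<in> S. colm u = y}"
proof
  show "nbhd V E y - {x} \<subseteq> {u \<in> S. colm u = y}" using bunch[OF assms] by (auto simp: nb_iff)
  show "{u \<in> S. colm u = y} \<subseteq> nbhd V E y - {x}" using colm xS by (auto simp: nb_iff)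
qed

lemma closed_Xi: assumes "a \<in> Xi" shows "nbhd V E a \<subseteq> N \<union> S"
proof -
  have "a \<in> (nbhd V E xi - {x}) \<union> (nbhd V E xj - {x})" using assms unfolding Xi_def by blast
  then have "nbhd V E a \<subseteq> N2 V E x" using closed by blast
  then show ?thesis unfolding N2_def N_def S_def .
qed
lemma closed_Xj: assumes "a \<in> Xj" shows "nbhd V E a \<subseteq> N \<union> S"
proof -
  have "a \<in> (nbhd V E xi - {x}) \<union> (nbhd V E xj - {x})" using assms unfolding Xj_def by blast
  then have "nbhd V E a \<subseteq> N2 V E x" using closed by blast
  then show ?thesis unfolding N2_def N_def S_def .
qed

lemma factA:
  assumes aS: "a \<in> S" and cl: "nbhd V E a \<subseteq> N \<union> S" and y: "y \<in> N" "y \<noteq> colm a"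
  shows "\<exists>u. E a u \<and> E y u \<and> u \<in> S \<and> colm u = y"
proof -
  define y0 where "y0 = colm a"
  have y0: "y0 \<in> N" "E y0 a" using colm aS unfolding y0_def by auto
  define A where "A = nbhd V E a - {y0}"
  have AS: "u \<in> S" "colm u \<noteq> y0" if "u \<in> A" for u
  proof -
    have ua: "E a u" "u \<noteq> y0" using that unfolding A_def by (auto simp: nb_iff)
    have "u \<notin> N"
    proof
      assume "u \<in> N"
      moreover have "a \<noteq> x" using aS S_iff by auto
      ultimately show False using noc4[of a x y0 u] ua y0 N_iff sy by blast
    qed
    then show "u \<in> S" using cl ua nb_iff by auto
    show "colm u \<noteq> y0"
    proof
      assume "colm u = y0"
      then have "E y0 u" using colm \<open>u \<in> S\<close> by metis
      then show False using notri[of a u y0] ua y0 sy by blast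
    qed
  qed
  have inj: "inj_on colm A"
  proof (rule inj_onI)
    fix u1 u2 assume u: "u1 \<in> A" "u2 \<in> A" "colm u1 = colm u2"
    show "u1 = u2"
    proof (rule ccontr)
      assume ne: "u1 \<noteq> u2"
      have "a \<noteq> colm u1" using aS colm(1)[of u1] AS u NS_disj by metis
      moreover have "E a u1" "E a u2" using u unfolding A_def by (auto simp: nb_iff)
      moreover have "E u1 (colm u1)" "E u2 (colm u1)" using colm(2) AS u sy by metis+
      ultimately show False using noc4[of a "colm u1" u1 u2] ne by blast
    qed
  qed
  have sub: "colm ` A \<subseteq> N - {y0}" using AS colm by blast
  have cA: "card A = d - 1" unfolding A_def using y0 card_nb[of a] aS S_iff nb_iff sy fin_nb by auto
  have cN: "card (N - {y0}) = d - 1" using cardN y0 finN by simp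
  have "colm ` A = N - {y0}"
    using card_subset_eq[OF _ sub] finN card_image[OF inj] cA cN by auto
  then have "y \<in> colm ` A" using y unfolding y0_def by auto
  then obtain u where "u \<in> A" "colm u = y" by auto
  moreover have "u \<in> S" "E a u" using AS \<open>u \<in> A\<close> unfolding A_def by (auto simp: nb_iff)
  ultimately show ?thesis using colm(2)[of u] by blast
qed

lemma Xi_S: "a \<in> Xi \<Longrightarrow> a \<in> S" using Xi_iff by auto

lemma factB:
  assumes u: "u \<in> S" and y: "colm u \<noteq> xi"
  shows "\<exists>a \<in> Xi. E a u"
proof -
  define y where "y = colm u"
  have yN: "y \<in> N" using colm u y_def by auto
  define g where "g a = (SOME w. E a w \<and> E y w \<and> w \<in> S \<and> colm w = y)" for a
  have g: "E a (g a) \<and> E y (g a) \<and> g a \<in> S \<and> colm (g a) = y" if "a \<in> Xi" for a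
  proof -
    have "\<exists>w. E a w \<and> E y w \<and> w \<in> S \<and> colm w = y"
      using factA[OF Xi_S[OF that] closed_Xi[OF that] yN] that Xi_iff y y_def by auto
    then show ?thesis unfolding g_def by (rule someI_ex)
  qed
  have inj: "inj_on g Xi"
  proof (rule inj_onI)
    fix a1 a2 assume a: "a1 \<in> Xi" "a2 \<in> Xi" "g a1 = g a2"
    show "a1 = a2"
    proof (rule ccontr)
      assume ne: "a1 \<noteq> a2"
      have g1: "E a1 (g a1)" "g a1 \<in> S" and g2: "E a2 (g a2)" using g[OF a(1)] g[OF a(2)] by auto
      have "xi \<noteq> g a1" using g1 NS_disj[OF xiN] by auto
      moreover have "E xi a1" "E xi a2" using Xi_iff[of a1] Xi_iff[of a2] colm(2)[of a1] colm(2)[of a2] a by auto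
      moreover have "E (g a1) a2" using g2 a(3) sy by simp
      ultimately show False using noc4[of a1 a2 xi "g a1"] ne g1 sy by blast
    qed
  qed
  have sub: "g ` Xi \<subseteq> nbhd V E y - {x}"
  proof
    fix w assume "w \<in> g ` Xi"
    then obtain a where "a \<in> Xi" "w = g a" by auto
    then show "w \<in> nbhd V E y - {x}" using g[of a] xS by (auto simp: nb_iff)
  qed
  have "card Xi = d - 1" unfolding Xi_def using card_bunch xiN by simp
  moreover have "finite (nbhd V E y - {x})" using fin_nb by simp
  ultimately have "g ` Xi = nbhd V E y - {x}"
    using card_subset_eq[OF _ sub] card_image[OF inj] card_bunch[OF yN] by auto
  moreover have "u \<in> nbhd V E y - {x}" using u colm(2)[OF u] xS unfolding y_def by (auto simp: nb_iff)
  ultimately obtain a where "a \<in> Xi" "u = g a" by auto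
  then show ?thesis using g[of a] by blast
qed

end


locale setting2 = setting +
  fixes c a0 and e :: "'a \<Rightarrow> nat"
  assumes cXj: "c \<in> Xj" and a0Xi: "a0 \<in> Xi" and a0c: "E a0 c" and e: "bij_betw e D {0..<d-2}"
begin

definition "T = nbhd V E c - {xj, a0}"
definition "pcol y = (if y = xi then 0 else if y = xj then d - 1 else (e y + 1) mod (d - 2) + 1)"
definition "kap v = (if v = x then d else if v \<in> N then pcol v
   else if v \<in> Xi then (if \<exists>t\<in>T. E v t then e (colm (SOME t. t \<in> T \<and> E v t)) + 1 else d - 1)
   else if v \<in> S then (if colm v = xj then d else if v \<in> T then d - 1 else e (colm v) + 1) else 0)"

lemma cS: "c \<in> S" and colmc: "colm c = xj" using cXj Xj_iff by auto
lemma a0S: "a0 \<in> S" and colma0: "colm a0 = xi" using a0Xi Xi_iff by auto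
lemma xjc: "E xj c" using colm(2)[OF cS] colmc by simp
lemma xia0: "E xi a0" using colm(2)[OF a0S] colma0 by simp
lemma eD: "y \<in> D \<Longrightarrow> e y < d - 2" using e unfolding bij_betw_def by auto
lemma e_inj: "y1 \<in> D \<Longrightarrow> y2 \<in> D \<Longrightarrow> e y1 = e y2 \<Longrightarrow> y1 = y2"
  using e unfolding bij_betw_def inj_on_def by blast
lemma e_surj: "m < d - 2 \<Longrightarrow> \<exists>y\<in>D. e y = m"
  using e unfolding bij_betw_def by (metis atLeastLessThan_iff imageE zero_le)
lemma D_iff: "y \<in> D \<longleftrightarrow> y \<in> N \<and> y \<noteq> xi \<and> y \<noteq> xj" unfolding D_def by auto

lemma Xi_colm: "a \<in> Xi \<Longrightarrow> colm a = xi" using Xi_iff by auto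
lemma Xi_E: "a \<in> Xi \<Longrightarrow> E xi a" using Xi_iff colm(2) by metis

lemma T_basic: assumes "t \<in> T" shows "E c t" "t \<noteq> xj" "t \<noteq> a0"
  using assms unfolding T_def by (auto simp: nb_iff)

lemma T_S: assumes "t \<in> T" shows "t \<in> S"
proof -
  have ct: "E c t" using T_basic assms by auto
  have "t \<in> N \<union> S" using closed_Xj[OF cXj] ct by (auto simp: nb_iff)
  moreover have "t \<notin> N"
  proof
    assume "t \<in> N"
    then have "E x t" using N_iff by simp
    moreover have "x \<noteq> c" using S_x[OF cS] by simp
    moreover have "xj \<noteq> t" using T_basic(2)[OF assms] by auto
    ultimately show False using noc4[of x c xj t] xxj xjc ct sy by blast
  qed
  ultimately show ?thesis by blast
qed

lemma T_colm: assumes "t \<in> T" shows "colm t \<in> D"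
proof -
  have tS: "t \<in> S" using T_S assms by simp
  have ct: "E c t" using T_basic assms by auto
  have N: "colm t \<in> N" using colm tS by simp
  have "colm t \<noteq> xj"
  proof
    assume "colm t = xj"
    then have "E xj t" using colm(2)[OF tS] by simp
    then show False using notri[of xj c t] xjc ct by blast
  qed
  moreover have "colm t \<noteq> xi"
  proof
    assume "colm t = xi"
    then have "E xi t" using colm(2)[OF tS] by simp
    moreover have "xi \<noteq> c" using NS_disj[OF xiN] cS by blast
    moreover have "t \<noteq> a0" using T_basic assms by simp
    ultimately show False using noc4[of xi c t a0] xia0 a0c ct sy by blast
  qed
  ultimately show ?thesis using N D_iff by simp
qed

lemma T_notXi: "t \<in> T \<Longrightarrow> t \<notin> Xi" using T_colm Xi_colm D_iff by fastforce
lemma T_colm_nxj: "t \<in> T \<Longrightarrow> colm t \<noteq> xj" using T_colm D_iff by fastforce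

lemma T_indep: "t1 \<in> T \<Longrightarrow> t2 \<in> T \<Longrightarrow> \<not> E t1 t2"
  using notri[of c t1 t2] T_basic by blast

lemma T_inj: "inj_on colm T"
proof (rule inj_onI)
  fix t1 t2 assume t: "t1 \<in> T" "t2 \<in> T" "colm t1 = colm t2"
  show "t1 = t2"
  proof (rule ccontr)
    assume ne: "t1 \<noteq> t2"
    have "c \<noteq> colm t1" using NS_disj[OF colm(1)[OF T_S[OF t(1)]]] cS by blast
    moreover have "E t1 (colm t1)" "E t2 (colm t1)" using colm(2)[OF T_S[OF t(1)]] colm(2)[OF T_S[OF t(2)]] t(3) sy by auto
    ultimately show False using noc4[of c "colm t1" t1 t2] ne T_basic t by blast
  qed
qed


lemma cardT: "card T = d - 2"
proof -
  have "xj \<in> nbhd V E c" "a0 \<in> nbhd V E c" using xjc a0c sy by (auto simp: nb_iff)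
  moreover have "xj \<noteq> a0" using NS_disj[OF xjN] a0S by blast
  moreover have "card (nbhd V E c) = d" using card_nb inV(2)[OF xjc] by simp
  ultimately show ?thesis unfolding T_def using card2 fin_nb by metis
qed

lemma cardD: "card D = d - 2" unfolding D_def using card2[OF finN xiN xjN ij] cardN by simp

lemma colmT: "colm ` T = D"
proof -
  have "colm ` T \<subseteq> D" using T_colm by blast
  moreover have "card (colm ` T) = card D" using card_image[OF T_inj] cardT cardD by simp
  moreover have "finite D" using finN unfolding D_def by simp
  ultimately show ?thesis using card_subset_eq by blast
qed

lemma Xi_T_unique: assumes "a \<in> Xi" "t1 \<in> T" "t2 \<in> T" "E a t1" "E a t2" shows "t1 = t2"
proof (rule ccontr)
  assume ne: "t1 \<noteq> t2"
  have "a \<noteq> c" using Xi_colm[OF assms(1)] colmc ij by auto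
  then show False using noc4[of a c t1 t2] ne assms T_basic sy by blast
qed

lemma a0_noT: "t \<in> T \<Longrightarrow> \<not> E a0 t" using notri[of a0 c t] a0c T_basic by blast

lemma Xi_notN: "a \<in> Xi \<Longrightarrow> a \<notin> N" using NS_disj Xi_S by blast
lemma Xi_nx: "a \<in> Xi \<Longrightarrow> a \<noteq> x" using S_x Xi_S by blast

lemma kx: "kap x = d" unfolding kap_def by simp
lemma kN: "y \<in> N \<Longrightarrow> kap y = pcol y" unfolding kap_def using xN by auto
lemma kXi_T: assumes "a \<in> Xi" "t \<in> T" "E a t" shows "kap a = e (colm t) + 1"
proof -
  have ex: "\<exists>t\<in>T. E a t" using assms by blast
  have "(SOME t. t \<in> T \<and> E a t) \<in> T \<and> E a (SOME t. t \<in> T \<and> E a t)"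
    by (rule someI_ex) (use assms in blast)
  then have "(SOME t. t \<in> T \<and> E a t) = t" using Xi_T_unique assms by blast
  then show ?thesis unfolding kap_def using assms Xi_notN Xi_nx ex by simp
qed
lemma kXi_noT: assumes "a \<in> Xi" "\<forall>t\<in>T. \<not> E a t" shows "kap a = d - 1"
  unfolding kap_def using assms Xi_notN Xi_nx by simp
lemma kS: assumes "u \<in> S" "u \<notin> Xi"
  shows "kap u = (if colm u = xj then d else if u \<in> T then d - 1 else e (colm u) + 1)"
  unfolding kap_def using assms NS_disj S_x by auto

lemma kXi_range: assumes "a \<in> Xi" shows "1 \<le> kap a" "kap a \<le> d - 1"
proof -
  have "1 \<le> kap a \<and> kap a \<le> d - 1"
  proof (cases "\<exists>t\<in>T. E a t")
    case True
    then obtain t where "t \<in> T" "E a t" by blast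
    then show ?thesis using kXi_T[OF assms] eD[OF T_colm] by fastforce
  next
    case False then show ?thesis using kXi_noT[OF assms] d7 by simp
  qed
  then show "1 \<le> kap a" "kap a \<le> d - 1" by auto
qed

lemma pcol_le: "pcol y \<le> d - 1"
proof -
  have "(e y + 1) mod (d - 2) < d - 2" using d7 by simp
  then show ?thesis unfolding pcol_def by auto
qed

lemma pcol_D: assumes "y \<in> D" shows "pcol y \<le> d - 2" "pcol y \<noteq> e y + 1"
proof -
  have yy: "y \<noteq> xi" "y \<noteq> xj" using assms D_iff by auto
  have "(e y + 1) mod (d - 2) < d - 2" using d7 by simp
  then show "pcol y \<le> d - 2" unfolding pcol_def using yy by simp
  have ey: "e y < d - 2" using eD assms .
  show "pcol y \<noteq> e y + 1"
  proof (cases "e y + 1 < d - 2")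
    case True then show ?thesis unfolding pcol_def using yy by simp
  next
    case False then have "e y + 1 = d - 2" using ey by simp
    then show ?thesis unfolding pcol_def using yy d7 by simp
  qed
qed

lemma S_notXi_D: assumes "u \<in> S" "u \<notin> Xi" "colm u \<noteq> xj" shows "colm u \<in> D"
  using assms Xi_iff colm(1)[OF assms(1)] D_iff by auto

lemma kS_le: assumes "u \<in> S" "u \<notin> Xi" shows "kap u \<le> d"
proof (cases "colm u = xj")
  case False
  then have "e (colm u) < d - 2" using eD S_notXi_D assms by blast
  then show ?thesis using kS[OF assms] by auto
qed (use kS[OF assms] in auto)

end


context setting2
begin

lemma rowcell: assumes a: "a \<in> Xi" and v: "v \<in> S" "v \<notin> Xi" and av: "E a v" shows "kap a \<noteq> kap v"
proof (cases "colm v = xj")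
  case True
  then show ?thesis using kS[OF v] kXi_range[OF a] d7 by auto
next
  case nxj: False
  have vD: "colm v \<in> D" using S_notXi_D v nxj by blast
  show ?thesis
  proof (cases "v \<in> T")
    case True
    then have "kap a = e (colm v) + 1" using kXi_T a av by blast
    moreover have "kap v = d - 1" using kS[OF v] True nxj by simp
    ultimately show ?thesis using eD[OF vD] by simp
  next
    case vT: False
    have kv: "kap v = e (colm v) + 1" using kS[OF v] vT nxj by simp
    show ?thesis
    proof (cases "\<exists>t\<in>T. E a t")
      case True
      then obtain t where t: "t \<in> T" "E a t" by blast
      show ?thesis
      proof
        assume "kap a = kap v"
        then have "e (colm t) = e (colm v)" using kXi_T[OF a t] kv by simp
        then have eq: "colm t = colm v" using e_inj T_colm[OF t(1)] vD by blast
        have "t \<noteq> v" using vT t by blast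
        moreover have "a \<noteq> colm v" using NS_disj[OF colm(1)[OF v(1)]] Xi_S[OF a] by blast
        moreover have "E t (colm v)" using colm(2)[OF T_S[OF t(1)]] eq sy by simp
        moreover have "E v (colm v)" using colm(2)[OF v(1)] sy by simp
        ultimately show False using noc4[of a "colm v" t v] t(2) av by blast
      qed
    next
      case False
      then have "kap a = d - 1" using kXi_noT a by blast
      then show ?thesis using kv eD[OF vD] by simp
    qed
  qed
qed

lemma cellcell: assumes u: "u \<in> S" "u \<notin> Xi" and v: "v \<in> S" "v \<notin> Xi" and uv: "E u v"
  shows "kap u \<noteq> kap v"
proof -
  have cne: "colm u \<noteq> colm v"
  proof
    assume "colm u = colm v"
    then show False using notri[of "colm u" u v] colm(2)[OF u(1)] colm(2)[OF v(1)] uv by simp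
  qed
  show ?thesis
  proof (cases "colm u = xj")
    case True
    then have "colm v \<noteq> xj" using cne by simp
    then have "kap v \<noteq> d" using kS[OF v] eD[OF S_notXi_D[OF v]] d7 by auto
    then show ?thesis using kS[OF u] True by simp
  next
    case uxj: False
    show ?thesis
    proof (cases "colm v = xj")
      case True
      then have "kap u \<noteq> d" using kS[OF u] eD[OF S_notXi_D[OF u uxj]] d7 uxj by auto
      then show ?thesis using kS[OF v] True by simp
    next
      case vxj: False
      have uD: "colm u \<in> D" and vD: "colm v \<in> D" using S_notXi_D u v uxj vxj by blast+
      have ku: "kap u = (if u \<in> T then d - 1 else e (colm u) + 1)" using kS[OF u] uxj by simp
      have kv: "kap v = (if v \<in> T then d - 1 else e (colm v) + 1)" using kS[OF v] vxj by simp
      show ?thesis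
      proof (cases "u \<in> T"; cases "v \<in> T")
        assume "u \<in> T" "v \<in> T" then show ?thesis using T_indep uv by blast
      next
        assume "u \<in> T" "v \<notin> T" then show ?thesis using ku kv eD[OF vD] by simp
      next
        assume "u \<notin> T" "v \<in> T" then show ?thesis using ku kv eD[OF uD] by simp
      next
        assume "u \<notin> T" "v \<notin> T" then show ?thesis using ku kv e_inj[OF uD vD] cne by auto
      qed
    qed
  qed
qed

lemma Nvert: assumes y: "y \<in> N" and v: "v \<in> S" and yv: "E y v" shows "kap y \<noteq> kap v"
proof -
  have cv: "colm v = y" using colm_unique v y yv by blast
  have ky: "kap y = pcol y" using kN y by simp
  show ?thesis
  proof (cases "y = xi")
    case True
    then have "v \<in> Xi" using Xi_iff v cv by simp
    then show ?thesis using kXi_range ky True unfolding pcol_def by fastforce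
  next
    case nxi: False
    then have vX: "v \<notin> Xi" using Xi_iff cv by auto
    show ?thesis
    proof (cases "y = xj")
      case True
      then show ?thesis using kS[OF v vX] cv ky ij d7 unfolding pcol_def by auto
    next
      case False
      then have yD: "y \<in> D" using D_iff y nxi by simp
      have "kap v = (if v \<in> T then d - 1 else e y + 1)" using kS[OF v vX] cv False by simp
      then show ?thesis using pcol_D[OF yD] ky d7 by auto
    qed
  qed
qed

definition "P = insert x (N \<union> S)"

lemma P_sub: "P \<subseteq> V"
proof -
  have "N \<subseteq> V" unfolding N_def using nb_sub .
  moreover have "S \<subseteq> V" unfolding S_def S2_def by auto
  ultimately show ?thesis unfolding P_def using xV by auto
qed

lemma proper: assumes "u \<in> P" "v \<in> P" "E u v" shows "kap u \<noteq> kap v"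
proof -
  have gen: "kap u \<noteq> kap v" if u: "u \<in> P" and v: "v \<in> P" and uv: "E u v"
     and ord: "u = x \<or> (u \<in> N \<and> v \<noteq> x) \<or> (u \<in> Xi \<and> v \<in> S) \<or> (u \<in> S \<and> u \<notin> Xi \<and> v \<in> S \<and> v \<notin> Xi)" for u v
  proof -
    consider "u = x" | "u \<in> N" "v \<noteq> x" | "u \<in> Xi" "v \<in> S" | "u \<in> S" "u \<notin> Xi" "v \<in> S" "v \<notin> Xi"
      using ord by blast
    then show ?thesis
    proof cases
      case 1
      then have "v \<in> N" using uv N_iff by simp
      then have "kap v \<le> d - 1" using kN pcol_le by simp
      then show ?thesis using 1 kx d7 by simp
    next
      case 2
      then have "v \<notin> N" using notri[of x u v] N_iff uv by blast
      then have "v \<in> S" using v 2 unfolding P_def by blast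
      then show ?thesis using Nvert 2 uv by blast
    next
      case 3
      show ?thesis
      proof (cases "v \<in> Xi")
        case True
        then show ?thesis using notri[of xi u v] Xi_E 3 uv by blast
      next
        case False then show ?thesis using rowcell 3 uv by blast
      qed
    next
      case 4 then show ?thesis using cellcell uv by blast
    qed
  qed
  have uP: "u = x \<or> u \<in> N \<or> u \<in> S" and vP: "v = x \<or> v \<in> N \<or> v \<in> S" using assms unfolding P_def by auto
  have nxS: "\<not> (u = x \<and> v \<in> S)" "\<not> (v = x \<and> u \<in> S)" using S_nx assms(3) sy by blast+
  have sy2: "E v u" using assms(3) sy by simp
  show ?thesis
  proof (cases "u = x \<or> (u \<in> N \<and> v \<noteq> x) \<or> (u \<in> Xi \<and> v \<in> S) \<or> (u \<in> S \<and> u \<notin> Xi \<and> v \<in> S \<and> v \<notin> Xi)")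
    case True then show ?thesis using gen assms by blast
  next
    case False
    then have "v = x \<or> (v \<in> N \<and> u \<noteq> x) \<or> (v \<in> Xi \<and> u \<in> S) \<or> (v \<in> S \<and> v \<notin> Xi \<and> u \<in> S \<and> u \<notin> Xi)"
      using uP vP nxS NS_disj Xi_S by blast
    then have "kap v \<noteq> kap u" using gen assms sy2 by blast
    then show ?thesis by simp
  qed
qed

lemma P_le: "v \<in> P \<Longrightarrow> kap v < Suc d"
proof -
  assume "v \<in> P"
  then consider "v = x" | "v \<in> N" | "v \<in> Xi" | "v \<in> S" "v \<notin> Xi" unfolding P_def by blast
  then show ?thesis
  proof cases
    case 1 then show ?thesis using kx by simp
  next
    case 2 then show ?thesis using kN pcol_le[of v] d7 by simp
  next
    case 3 then show ?thesis using kXi_range[OF 3] by simp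
  next
    case 4 then show ?thesis using kS_le[OF 4] by simp
  qed
qed

end


context setting2
begin

lemma rows_surj: assumes "1 \<le> j" "j \<le> d - 1" shows "\<exists>a\<in>Xi. kap a = j"
proof (cases "j = d - 1")
  case True
  then show ?thesis using kXi_noT[OF a0Xi] a0_noT a0Xi by blast
next
  case False
  then have "j - 1 < d - 2" using assms by simp
  then obtain y where y: "y \<in> D" "e y = j - 1" using e_surj by blast
  then obtain t where t: "t \<in> T" "colm t = y" using colmT by (metis imageE)
  have "colm t \<noteq> xi" using t y D_iff by simp
  then obtain a where a: "a \<in> Xi" "E a t" using factB T_S[OF t(1)] by blast
  then have "kap a = j" using kXi_T[OF a(1) t(1) a(2)] t y assms by simp
  then show ?thesis using a by blast
qed

lemma full_x: "j < Suc d \<Longrightarrow> \<exists>u\<in>insert x (nbhd V E x). kap u = j"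
proof -
  assume j: "j < Suc d"
  have Nn: "N = nbhd V E x" unfolding N_def ..
  consider "j = d" | "j = 0" | "j = d - 1" | "1 \<le> j" "j \<le> d - 2" using j by linarith
  then show ?thesis
  proof cases
    case 1 then show ?thesis using kx by auto
  next
    case 2 then show ?thesis using kN[OF xiN] xiN Nn unfolding pcol_def by auto
  next
    case 3 then show ?thesis using kN[OF xjN] xjN Nn ij unfolding pcol_def by auto
  next
    case 4
    define m where "m = (if j = 1 then d - 3 else j - 2)"
    have "m < d - 2" unfolding m_def using 4 d7 by auto
    then obtain y where y: "y \<in> D" "e y = m" using e_surj by blast
    have yy: "y \<in> N" "y \<noteq> xi" "y \<noteq> xj" using y D_iff by auto
    have "(e y + 1) mod (d - 2) + 1 = j"
    proof (cases "j = 1")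
      case True
      then have "e y + 1 = d - 2" using y d7 unfolding m_def by simp
      then show ?thesis using True by simp
    next
      case False
      then have "e y + 1 = j - 1" "j - 1 < d - 2" using y 4 unfolding m_def by auto
      then show ?thesis using 4 False by simp
    qed
    then have "kap y = j" using kN[OF yy(1)] yy unfolding pcol_def by simp
    then show ?thesis using yy Nn by blast
  qed
qed

lemma full_xi: "j < Suc d \<Longrightarrow> \<exists>u\<in>insert xi (nbhd V E xi). kap u = j"
proof -
  assume j: "j < Suc d"
  consider "j = d" | "j = 0" | "1 \<le> j" "j \<le> d - 1" using j by linarith
  then show ?thesis
  proof cases
    case 1 then show ?thesis using kx xxi sy by (auto simp: nb_iff)
  next
    case 2 then show ?thesis using kN[OF xiN] unfolding pcol_def by auto
  next
    case 3
    then obtain a where "a \<in> Xi" "kap a = j" using rows_surj by blast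
    then show ?thesis unfolding Xi_def by blast
  qed
qed

lemma full_a: assumes a: "a \<in> Xi" shows "j < Suc d \<Longrightarrow> \<exists>u\<in>insert a (nbhd V E a). kap u = j"
proof -
  assume j: "j < Suc d"
  have aS: "a \<in> S" using Xi_S a .
  have ca: "colm a = xi" using Xi_colm a .
  consider "j = kap a" | "j = d" | "j = 0" | "j = d - 1" "j \<noteq> kap a" | "1 \<le> j" "j \<le> d - 2" "j \<noteq> kap a"
    using j by linarith
  then show ?thesis
  proof cases
    case 1 then show ?thesis by blast
  next
    case 2
    obtain u where u: "E a u" "u \<in> S" "colm u = xj"
      using factA[OF aS closed_Xi[OF a] xjN] ca ij by metis
    then have "u \<notin> Xi" using Xi_iff ij by auto
    then have "kap u = d" using kS u by simp
    then show ?thesis using u 2 by (auto simp: nb_iff)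
  next
    case 3 then show ?thesis using kN[OF xiN] Xi_E[OF a] sy unfolding pcol_def by (auto simp: nb_iff)
  next
    case 4
    then have "\<exists>t\<in>T. E a t" using kXi_noT[OF a] by metis
    then obtain t where t: "t \<in> T" "E a t" by blast
    have "kap t = d - 1" using kS[OF T_S[OF t(1)] T_notXi[OF t(1)]] T_colm_nxj[OF t(1)] t(1) by simp
    then show ?thesis using t 4 by (auto simp: nb_iff)
  next
    case 5
    then have "j - 1 < d - 2" by simp
    then obtain y where y: "y \<in> D" "e y = j - 1" using e_surj by blast
    have yy: "y \<in> N" "y \<noteq> xi" "y \<noteq> xj" using y D_iff by auto
    obtain u where u: "E a u" "u \<in> S" "colm u = y"
      using factA[OF aS closed_Xi[OF a] yy(1)] ca yy by metis
    have uX: "u \<notin> Xi" using Xi_iff u yy by auto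
    show ?thesis
    proof (cases "u \<in> T")
      case True
      then have "kap a = j" using kXi_T[OF a True u(1)] u y 5 by simp
      then show ?thesis using 5 by simp
    next
      case False
      then have "kap u = j" using kS[OF u(2) uX] u yy y 5 by simp
      then show ?thesis using u by (auto simp: nb_iff)
    qed
  qed
qed

lemma nbP: assumes "v = x \<or> v = xi \<or> v \<in> Xi" shows "insert v (nbhd V E v) \<subseteq> P"
proof -
  have "nbhd V E x \<subseteq> P" unfolding P_def N_def by auto
  moreover have "nbhd V E xi \<subseteq> P"
  proof
    fix u assume "u \<in> nbhd V E xi"
    then have "u = x \<or> u \<in> Xi" unfolding Xi_def by blast
    then show "u \<in> P" unfolding P_def using Xi_S by blast
  qed
  moreover have "nbhd V E v \<subseteq> P" if "v \<in> Xi" for v using closed_Xi[OF that] unfolding P_def by blast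
  moreover have "x \<in> P" "xi \<in> P" unfolding P_def using xiN by auto
  moreover have "v \<in> P" if "v \<in> Xi" for v using Xi_S[OF that] unfolding P_def by blast
  ultimately show ?thesis using assms by blast
qed

lemma exists_bcol: "\<exists>col. b_coloring V E (Suc d) col"
proof -
  have rng: "\<forall>v\<in>P. kap v < Suc d" using P_le by blast
  have pr: "\<forall>u\<in>P. \<forall>v\<in>P. E u v \<longrightarrow> kap u \<noteq> kap v" using proper by blast
  obtain col where c1: "\<forall>v\<in>V. col v < Suc d" and c2: "\<forall>u\<in>V. \<forall>v\<in>V. E u v \<longrightarrow> col u \<noteq> col v"
    and c3: "\<forall>v\<in>P. col v = kap v"
    using greedy[OF P_sub rng pr] by blast
  have bv: "\<exists>v\<in>V. col v = i \<and> (\<forall>j < Suc d. \<exists>u \<in> insert v (nbhd V E v). col u = j)" if i: "i < Suc d" for i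
  proof -
    obtain v where v: "v = x \<or> v = xi \<or> v \<in> Xi" "kap v = i"
    proof -
      consider "i = d" | "i = 0" | "1 \<le> i" "i \<le> d - 1" using i by linarith
      then show ?thesis
      proof cases
        case 1 then show ?thesis using that kx by blast
      next
        case 2 then show ?thesis using that kN[OF xiN] unfolding pcol_def by auto
      next
        case 3 then show ?thesis using that rows_surj by blast
      qed
    qed
    have sub: "insert v (nbhd V E v) \<subseteq> P" using nbP v(1) by blast
    have full: "\<forall>j < Suc d. \<exists>u \<in> insert v (nbhd V E v). kap u = j"
      using v(1) full_x full_xi full_a by blast
    have "v \<in> V" using sub P_sub by blast
    moreover have "col v = i" using sub c3 v(2) by auto
    moreover have "\<forall>j < Suc d. \<exists>u \<in> insert v (nbhd V E v). col u = j"
    proof (intro allI impI)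
      fix j assume "j < Suc d"
      then obtain u where "u \<in> insert v (nbhd V E v)" "kap u = j" using full by blast
      then show "\<exists>u \<in> insert v (nbhd V E v). col u = j" using sub c3 by blast
    qed
    ultimately show ?thesis by blast
  qed
  show ?thesis unfolding b_coloring_def using c1 c2 bv by blast
qed

end

theorem mainTheorem8:
  fixes V :: "'a set" and E :: "'a \<Rightarrow> 'a \<Rightarrow> bool" and d :: nat
  assumes "simple_graph V E"
    and "d \<ge> 7"
    and "regular V E d"
    and "girth V E = 5"
    and "x \<in> V" and "xi \<in> nbhd V E x" and "xj \<in> nbhd V E x" and "xi \<noteq> xj"
    and "\<forall>w \<in> (nbhd V E xi - {x}) \<union> (nbhd V E xj - {x}). nbhd V E w \<subseteq> N2 V E x"
  shows "b_chromatic V E = d + 1"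
proof -
  have notri: "\<And>a b c. E a b \<Longrightarrow> E b c \<Longrightarrow> E a c \<Longrightarrow> False"
    using girth5_notri[OF assms(1) assms(4)] by blast
  have noc4: "\<And>u v w1 w2. u \<noteq> v \<Longrightarrow> w1 \<noteq> w2 \<Longrightarrow> E u w1 \<Longrightarrow> E w1 v \<Longrightarrow> E u w2 \<Longrightarrow> E w2 v \<Longrightarrow> False"
    using girth5_noc4[OF assms(1) assms(4)] by blast
  interpret G: g5 V E d using g5.intro[OF assms(1) assms(3) notri noc4] .
  have xxi: "E x xi" and xxj: "E x xj" using assms(6,7) G.nb_iff by auto
  interpret S: setting V E d x xi xj
    by (rule setting.intro[OF G.g5_axioms], rule setting_axioms.intro) (use assms xxi xxj in blast)+
  have "card S.Xj = d - 1" unfolding S.Xj_def using S.card_bunch[OF S.xjN] .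
  then have "S.Xj \<noteq> {}" using assms(2) by auto
  then obtain c where c: "c \<in> S.Xj" by blast
  then have cS: "c \<in> S.S" "S.colm c \<noteq> xi" using S.Xj_iff assms(8) by auto
  obtain a0 where a0: "a0 \<in> S.Xi" "E a0 c" using S.factB[OF cS] by blast
  have "card S.D = d - 2" unfolding S.D_def using card2[OF S.finN S.xiN S.xjN assms(8)] S.cardN by simp
  moreover have "finite S.D" unfolding S.D_def using S.finN by simp
  ultimately obtain e where e: "bij_betw e S.D {0..<d-2}" using ex_bij_betw_finite_nat by metis
  interpret S2: setting2 V E d x xi xj c a0 e
    by (rule setting2.intro[OF S.setting_axioms], rule setting2_axioms.intro) (use c a0 e in blast)+
  have ex: "\<exists>col. b_coloring V E (Suc d) col" using S2.exists_bcol .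
  show ?thesis unfolding b_chromatic_def
  proof (rule Greatest_equality)
    show "\<exists>col. b_coloring V E (d + 1) col" using ex by simp
  next
    fix k assume "\<exists>col. b_coloring V E k col"
    then show "k \<le> d + 1" using G.bcol_le by auto
  qed
qed

end
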